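(* Let $a>0$, $b\ge0$, $\eta>0$, $\alpha>0$. Let $(r_t)_{t\ge0}$ be real numbers satisfying $r_{t+1}\le r_t-\alpha\frac a2r_t^2+\alpha\frac b\eta$ for all $t\ge0$, and define $\rho_0=r_0$, $\rho_{t+1}=\rho_t-\alpha\frac a2\rho_t^2+\alpha\frac b\eta$ for $t\ge0$. If $\alpha\le\frac{1}{a\rho_t}$ (for all $t$), then $\rho_t\ge r_t$ for every $t\ge0$. *)

theory Defs
  imports Complex_Main
begin

end

theory Submission
  imports Defs
begin

theorem lemmaC7:
  fixes a b \<eta> \<alpha> :: real and r \<rho> :: "nat \<Rightarrow> real"
  assumes "a > 0" and "b \<ge> 0" and "\<eta> > 0" and "\<alpha> > 0"
    and "\<And>t. r (Suc t) \<le> r t - \<alpha> * (a / 2) * (r t)^2 + \<alpha> * (b / \<eta>)"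
    and "\<rho> 0 = r 0"
    and "\<And>t. \<rho> (Suc t) = \<rho> t - \<alpha> * (a / 2) * (\<rho> t)^2 + \<alpha> * (b / \<eta>)"
    and "\<And>t. \<alpha> \<le> 1 / (a * \<rho> t)"
  shows "\<forall>t. \<rho> t \<ge> r t"
proof
  have key: "\<alpha> * a * \<rho> t \<le> 1" for t
  proof -
    have h: "\<alpha> \<le> 1 / (a * \<rho> t)" by (rule assms(8))
    have pos: "a * \<rho> t > 0"
    proof (rule ccontr)
      assume "\<not> a * \<rho> t > 0"
      then have "1 / (a * \<rho> t) \<le> 0" by simp
      with h assms(4) show False by linarith
    qed
    from h pos have "\<alpha> * (a * \<rho> t) \<le> 1" by (simp add: field_simps)
    then show ?thesis by (simp add: mult.assoc)
  qed
  fix t show "\<rho> t \<ge> r t"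
  proof (induction t)
    case 0 then show ?case using assms(6) by simp
  next
    case (Suc t)
    have "\<alpha> * a * (\<rho> t + r t) \<le> 2"
    proof -
      have "\<alpha> * a * r t \<le> \<alpha> * a * \<rho> t" using Suc assms(1,4) by simp
      then show ?thesis using key[of t] by (simp add: distrib_left)
    qed
    then have nn: "0 \<le> (\<rho> t - r t) * (1 - \<alpha> * (a/2) * (\<rho> t + r t))"
      using Suc by (intro mult_nonneg_nonneg) auto
    then have "r t - \<alpha> * (a / 2) * (r t)^2 \<le> \<rho> t - \<alpha> * (a / 2) * (\<rho> t)^2"
    proof -
      have "(\<rho> t - \<alpha> * (a / 2) * (\<rho> t)^2) - (r t - \<alpha> * (a / 2) * (r t)^2) = (\<rho> t - r t) * (1 - \<alpha> * (a/2) * (\<rho> t + r t))"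
        by (simp add: field_simps power2_eq_square)
      with nn show ?thesis by linarith
    qed
    then show ?case using assms(5)[of t] assms(7)[of t] by linarith
  qed
qed

end
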